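(* Let $\chi=\chi_D$ be an exceptional (real, non-principal) Dirichlet character modulo $D$, let $q\ge1$ and let $a$ be an integer with $(a,q)=1$. Then $$\psi(x,q,a)\le S_W'(x,q,a)+O\left(R\log^2 x\right),$$ where $S_W'(x,q,a)=\sum_{n\le x,\ n\equiv a\ (\mathrm{mod}\ q)}\lambda'_W(n)$.
   Context: $\psi(x,q,a)=\sum_{n\le x,\ n\equiv a\ (\mathrm{mod}\ q)}\Lambda(n)$ with $\Lambda$ the von Mangoldt function. $\lambda'=\chi\ast\log$, i.e. $\lambda'(n)=\sum_{d\mid n}\chi(d)\log(n/d)$. $R=\max\{D^5,\ x e^{-(\log x)^{1/2}}\}$. $P(n)$ is the smallest prime divisor of $n$, and $\lambda'_W(n)=\lambda'(n)\mathbf 1_{P(n)>R}\,\mu(n)^2$ with $\mu$ the Möbius function. *)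

theory Defs
  imports "HOL-Analysis.Analysis" "HOL-Number_Theory.Number_Theory" "HOL-Computational_Algebra.Squarefree"
begin

definition real_dirichlet_char :: "nat \<Rightarrow> (nat \<Rightarrow> real) \<Rightarrow> bool" where
  "real_dirichlet_char D chi \<longleftrightarrow> D \<ge> 1 \<and>
     (\<forall>m n. chi (m * n) = chi m * chi n) \<and>
     (\<forall>n. chi (n + D) = chi n) \<and>
     (\<forall>n. chi n = 0 \<longleftrightarrow> \<not> coprime n D) \<and> chi 1 = 1"

definition nonprincipal :: "nat \<Rightarrow> (nat \<Rightarrow> real) \<Rightarrow> bool" where
  "nonprincipal D chi \<longleftrightarrow> (\<exists>n. coprime n D \<and> chi n \<noteq> 1)"

text \<open>L(s,chi) for real s in (0,1), via the (conditionally convergent) Dirichlet series.\<close>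
definition L_real :: "(nat \<Rightarrow> real) \<Rightarrow> real \<Rightarrow> real" where
  "L_real chi s = lim (\<lambda>N. \<Sum>n=1..N. chi n / real n powr s)"

definition exceptional :: "real \<Rightarrow> nat \<Rightarrow> (nat \<Rightarrow> real) \<Rightarrow> bool" where
  "exceptional c D chi \<longleftrightarrow> real_dirichlet_char D chi \<and> nonprincipal D chi \<and>
     (\<exists>\<beta>. 1 - c / ln (real D) < \<beta> \<and> \<beta> < 1 \<and> L_real chi \<beta> = 0)"

definition psi_ap :: "real \<Rightarrow> nat \<Rightarrow> int \<Rightarrow> real" where
  "psi_ap x q a = (\<Sum>n\<in>{n. 1 \<le> n \<and> real n \<le> x \<and> [int n = a] (mod int q)}. mangoldt n)"

definition lambda' :: "(nat \<Rightarrow> real) \<Rightarrow> nat \<Rightarrow> real" where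
  "lambda' chi n = (\<Sum>d | d dvd n. chi d * ln (real n / real d))"

text \<open>P(n) > R, i.e. every prime divisor of n exceeds R (vacuous for n = 1).\<close>
definition spf_gt :: "nat \<Rightarrow> real \<Rightarrow> bool" where
  "spf_gt n R \<longleftrightarrow> (\<forall>p. prime p \<and> p dvd n \<longrightarrow> real p > R)"

definition lambda'_W :: "(nat \<Rightarrow> real) \<Rightarrow> real \<Rightarrow> nat \<Rightarrow> real" where
  "lambda'_W chi R n = (if spf_gt n R \<and> squarefree n then lambda' chi n else 0)"

definition R_param :: "nat \<Rightarrow> real \<Rightarrow> real" where
  "R_param D x = max (real D ^ 5) (x * exp (- sqrt (ln x)))"

definition S'_W :: "(nat \<Rightarrow> real) \<Rightarrow> nat \<Rightarrow> real \<Rightarrow> nat \<Rightarrow> int \<Rightarrow> real" where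
  "S'_W chi D x q a = (\<Sum>n\<in>{n. 1 \<le> n \<and> real n \<le> x \<and> [int n = a] (mod int q)}.
      lambda'_W chi (R_param D x) n)"

end

theory Submission
  imports Defs
begin

lemma D_ge2:
  assumes "exceptional c D chi" shows "D \<ge> 2"
proof (rule ccontr)
  assume "\<not> D \<ge> 2"
  moreover have "D \<ge> 1" using assms by (simp add: exceptional_def real_dirichlet_char_def)
  ultimately have D1: "D = 1" by simp
  have per: "\<And>n. chi (n + 1) = chi n" using assms D1 by (simp add: exceptional_def real_dirichlet_char_def)
  have c1: "chi 1 = 1" using assms by (simp add: exceptional_def real_dirichlet_char_def)
  have "\<And>n. chi n = chi 0"
  proof -
    fix n show "chi n = chi 0" by (induction n) (use per in \<open>simp_all\<close>)
  qed
  hence "\<And>n. chi n = 1" using c1 by metis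
  moreover obtain n where "chi n \<noteq> 1" using assms by (auto simp: exceptional_def nonprincipal_def)
  ultimately show False by blast
qed

lemma R_sq:
  assumes "D \<ge> 2" "x \<ge> 2"
  shows "x \<le> (R_param D x)^2" "R_param D x \<ge> 32"
proof -
  have "real D ^ 5 \<ge> 2 ^ 5" using assms by (intro power_mono) auto
  hence R32: "R_param D x \<ge> 32" unfolding R_param_def by simp
  thus "R_param D x \<ge> 32" .
  show "x \<le> (R_param D x)^2"
  proof (cases "ln x \<ge> 4")
    case True
    define t where "t = ln x"
    have x: "x = exp t" using assms t_def by simp
    have st: "2 * sqrt t \<le> t"
    proof -
      have "sqrt t \<ge> 2" using True t_def real_sqrt_le_mono[of 4 t] by simp
      hence "2 * sqrt t \<le> sqrt t * sqrt t" using True t_def by (intro mult_right_mono) auto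
      thus ?thesis using True t_def by (simp add: power2_eq_square[symmetric])
    qed
    have "(x * exp (- sqrt (ln x)))^2 = exp (2*t - 2 * sqrt t)"
      by (simp add: x t_def[symmetric] power2_eq_square exp_add[symmetric] exp_diff)
    also have "\<dots> \<ge> exp t" using st by simp
    finally have "x \<le> (x * exp (- sqrt (ln x)))^2" using x by simp
    also have "\<dots> \<le> (R_param D x)^2" unfolding R_param_def
      using assms by (intro power_mono) auto
    finally show ?thesis .
  next
    case False
    hence "x < exp 4" using assms by (metis exp_ln less_eq_real_def not_less_iff_gr_or_eq order.trans zero_le_numeral ln_le_cancel_iff exp_gt_zero le_less_trans less_le_trans ln_exp not_le)
    also have "exp (4::real) = exp 1 ^ 4" by (simp add: exp_of_nat_mult[symmetric])
    also have "\<dots> \<le> 3 ^ 4" using exp_le by (intro power_mono) auto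
    also have "\<dots> \<le> (R_param D x)^2" using R32 power_mono[of 32 "R_param D x" 2] by simp
    finally show ?thesis by simp
  qed
qed

lemma lambda'_prime:
  assumes "prime p" "chi 1 = 1" shows "lambda' chi p = ln (real p)"
proof -
  have "{d. d dvd p} = {1, p}" using assms(1) prime_nat_iff by auto
  moreover have "p \<noteq> 1" using assms(1) by auto
  ultimately show ?thesis using assms by (simp add: lambda'_def)
qed

lemma lambda'_one: "chi 1 = 1 \<Longrightarrow> lambda' chi 1 = 0"
  by (simp add: lambda'_def)

lemma lw_eq:
  assumes "x \<le> R^2" "R > 0" "n \<ge> 1" "real n \<le> x" "chi 1 = 1"
  shows "lambda'_W chi R n = (if prime n \<and> real n > R then ln (real n) else 0)"
proof (cases "spf_gt n R \<and> squarefree n")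
  case True
  show ?thesis
  proof (cases "n = 1")
    case True then show ?thesis using assms lambda'_one[of chi] by (simp add: lambda'_W_def spf_gt_def)
  next
    case n1: False
    show ?thesis
    proof (cases "prime n")
      case True
      then show ?thesis using \<open>spf_gt n R \<and> squarefree n\<close> assms
        by (auto simp: lambda'_W_def lambda'_prime spf_gt_def)
    next
      case False
      obtain p where p: "prime p" "p dvd n" using n1 prime_factor_nat by blast
      then obtain m where m: "n = p * m" by (auto elim: dvdE)
      have "m \<noteq> 1" using m p False by auto
      moreover have "m \<noteq> 0" using m assms by auto
      ultimately obtain p' where p': "prime p'" "p' dvd m" using prime_factor_nat by blast
      have "p' dvd n" using m p' by simp
      have gp: "real p > R" "real p' > R" using True p p' \<open>p' dvd n\<close> by (auto simp: spf_gt_def)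
      have "p' \<le> m" using p' \<open>m \<noteq> 0\<close> by (simp add: dvd_imp_le)
      hence "real p * real p' \<le> real n" using m by (simp add: mult_left_mono flip: of_nat_mult)
      moreover have "R * R < real p * real p'" using gp assms(2) by (intro mult_strict_mono) auto
      ultimately have False using assms(1,4) by (simp add: power2_eq_square)
      thus ?thesis ..
    qed
  qed
next
  case False
  have "\<not> (prime n \<and> real n > R)"
  proof
    assume h: "prime n \<and> real n > R"
    hence "spf_gt n R" by (auto simp: spf_gt_def dest: primes_dvd_imp_eq[of _ n] )
    moreover have "squarefree n" using h by (simp add: squarefree_prime)
    ultimately show False using False by simp
  qed
  thus ?thesis using False unfolding lambda'_W_def by auto
qed


lemma pointwise:
  assumes "x \<le> R^2" "R > 0" "n \<ge> 1" "real n \<le> x" "chi 1 = 1" "x \<ge> 2"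
  shows "mangoldt n \<le> lambda'_W chi R n +
     (if n \<in> (\<lambda>(p,k). p^k) ` ({1..nat \<lfloor>R\<rfloor>} \<times> {1..nat \<lfloor>log 2 x\<rfloor>}) then ln x else 0)"
    (is "_ \<le> _ + (if n \<in> ?B then _ else _)")
proof -
  have lw: "lambda'_W chi R n = (if prime n \<and> real n > R then ln (real n) else 0)"
    using assms(1-5) by (rule lw_eq)
  have lw0: "lambda'_W chi R n \<ge> 0" using lw assms(3) by auto
  have lx: "ln x \<ge> 0" using assms(6) by simp
  show ?thesis
  proof (cases "primepow n")
    case False
    then show ?thesis using lw0 lx by (simp add: mangoldt_def)
  next
    case True
    then obtain p k where pk: "prime p" "k > 0" "n = p ^ k" by (auto simp: primepow_def)
    have mg: "mangoldt n = ln (real p)" using pk by simp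
    have p1: "p \<ge> 2" using pk prime_ge_2_nat by auto
    show ?thesis
    proof (cases "real p > R")
      case True
      have "k = 1"
      proof (rule ccontr)
        assume "k \<noteq> 1"
        hence "k \<ge> 2" using pk by auto
        hence "p ^ 2 \<le> p ^ k" using p1 by (intro power_increasing) auto
        hence "real p ^ 2 \<le> real n" using pk by (metis of_nat_le_iff of_nat_power)
        moreover have "R ^ 2 < real p ^ 2" using True assms(2) by (intro power_strict_mono) auto
        ultimately show False using assms(1,4) by linarith
      qed
      hence "lambda'_W chi R n = ln (real p)" using lw pk True by simp
      then show ?thesis using mg lx by simp
    next
      case False
      have "p \<le> nat \<lfloor>R\<rfloor>" using False by (simp add: le_nat_floor)
      moreover have "k \<le> nat \<lfloor>log 2 x\<rfloor>"
      proof -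
        have "(2::nat) ^ k \<le> p ^ k" using p1 by (intro power_mono) auto
        hence "real (2 ^ k) \<le> x" using pk assms(4) by (metis of_nat_le_iff order.trans)
        hence "2 powr real k \<le> x" by (simp add: powr_realpow)
        hence "log 2 (2 powr real k) \<le> log 2 x" using assms(6) by (subst log_le_cancel_iff) auto
        hence "real k \<le> log 2 x" by simp
        thus ?thesis by (simp add: le_nat_floor)
      qed
      ultimately have "n \<in> ?B" using pk p1 by (auto intro!: image_eqI[of _ _ "(p,k)"])
      moreover have "ln (real p) \<le> ln x"
      proof -
        have "p \<le> n" using pk p1 by (simp add: self_le_power)
        hence "real p \<le> x" using assms(4) by linarith
        thus ?thesis using p1 by simp
      qed
      ultimately show ?thesis using mg lw0 by simp
    qed
  qed
qed


theorem mainTheorem8: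
  "\<exists>C>0. \<forall>(c::real) D chi (q::nat) (a::int) (x::real).
      c > 0 \<longrightarrow> exceptional c D chi \<longrightarrow> q \<ge> 1 \<longrightarrow> coprime a (int q) \<longrightarrow> x \<ge> 2 \<longrightarrow>
      psi_ap x q a \<le> S'_W chi D x q a + C * R_param D x * (ln x)^2"
proof (intro exI[of _ 2] conjI allI impI)
  fix c :: real and D chi and q :: nat and a :: int and x :: real
  assume ex: "exceptional c D chi" and x2: "x \<ge> 2"
  define R where "R = R_param D x"
  have D2: "D \<ge> 2" using ex by (rule D_ge2)
  have xR: "x \<le> R^2" and R32: "R \<ge> 32" using R_sq[OF D2 x2] by (auto simp: R_def)
  have c1: "chi 1 = 1" using ex by (simp add: exceptional_def real_dirichlet_char_def)
  define S where "S = {n. 1 \<le> n \<and> real n \<le> x \<and> [int n = a] (mod int q)}"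
  define P where "P = nat \<lfloor>R\<rfloor>"
  define K where "K = nat \<lfloor>log 2 x\<rfloor>"
  define B where "B = (\<lambda>(p,k). p^k) ` ({1..P} \<times> {1..K})"
  have finS: "finite S"
  proof (rule finite_subset)
    show "S \<subseteq> {..nat \<lfloor>x\<rfloor>}" by (auto simp: S_def le_nat_floor)
  qed auto
  have finB: "finite B" by (simp add: B_def)
  have lx: "ln x \<ge> 0" using x2 by simp
  have "psi_ap x q a = (\<Sum>n\<in>S. mangoldt n)" by (simp add: psi_ap_def S_def)
  also have "\<dots> \<le> (\<Sum>n\<in>S. lambda'_W chi R n + (if n \<in> B then ln x else 0))"
  proof (rule sum_mono)
    fix n assume "n \<in> S"
    hence "n \<ge> 1" "real n \<le> x" by (auto simp: S_def)
    with pointwise[of x R n chi] xR R32 c1 x2 have "mangoldt n \<le> lambda'_W chi R n +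
     (if n \<in> (\<lambda>(p,k). p^k) ` ({1..nat \<lfloor>R\<rfloor>} \<times> {1..nat \<lfloor>log 2 x\<rfloor>}) then ln x else 0)"
      by simp
    then
    show "mangoldt n \<le> lambda'_W chi R n + (if n \<in> B then ln x else 0)"
      unfolding B_def P_def K_def by simp
  qed
  also have "\<dots> = S'_W chi D x q a + (\<Sum>n\<in>S. (if n \<in> B then ln x else 0))"
    by (simp add: sum.distrib S'_W_def S_def R_def)
  also have "(\<Sum>n\<in>S. (if n \<in> B then ln x else 0)) = (\<Sum>n\<in>S \<inter> B. ln x)"
    using finS by (simp only: sum.inter_restrict[symmetric])
  also have "\<dots> = real (card (S \<inter> B)) * ln x" by simp
  also have "\<dots> \<le> real (card B) * ln x"
    using finB lx by (intro mult_right_mono) (auto intro: card_mono)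
  also have "\<dots> \<le> real (P * K) * ln x"
  proof -
    have "card B \<le> card ({1..P} \<times> {1..K})" unfolding B_def by (rule card_image_le) auto
    hence "card B \<le> P * K" by simp
    hence "real (card B) \<le> real (P * K)" by (simp only: of_nat_le_iff)
    thus ?thesis using lx by (intro mult_right_mono) auto
  qed
  also have "\<dots> \<le> R * log 2 x * ln x"
  proof -
    have "real P \<le> R" using R32 by (simp add: P_def)
    moreover have "real K \<le> log 2 x"
    proof -
      have "log 2 x \<ge> 0" using x2 by simp
      thus ?thesis by (simp add: K_def)
    qed
    moreover have "log 2 x \<ge> 0" using x2 by simp
    ultimately have "real P * real K \<le> R * log 2 x" by (intro mult_mono) auto
    thus ?thesis using lx by (intro mult_right_mono) auto
  qed
  also have "\<dots> \<le> 2 * R * (ln x)^2"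
  proof -
    have e: "exp (1/2::real) * exp (1/2) = exp 1" by (simp add: exp_add[symmetric])
    have "exp (1/2::real) \<le> 2"
    proof (rule ccontr)
      assume "\<not> exp (1/2::real) \<le> 2"
      hence "2*2 < exp (1/2::real) * exp (1/2)" by (intro mult_strict_mono) auto
      thus False using e exp_le by simp
    qed
    hence l2: "ln (2::real) \<ge> 1/2" by (subst ln_ge_iff) auto
    have "log 2 x = ln x / ln 2" by (simp add: log_def)
    also have "\<dots> \<le> 2 * ln x" using l2 lx mult_left_mono[of 1 "2 * ln 2" "ln x"] by (simp add: divide_simps algebra_simps)
    finally have "log 2 x \<le> 2 * ln x" .
    hence "R * log 2 x * ln x \<le> R * (2 * ln x) * ln x" using R32 lx
      by (intro mult_right_mono mult_left_mono) auto
    thus ?thesis by (simp add: power2_eq_square algebra_simps)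
  qed
  finally show "psi_ap x q a \<le> S'_W chi D x q a + 2 * R_param D x * (ln x)^2"
    by (simp add: R_def)
qed simp

end
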